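(* Let $\hat\varphi^{(0)},\hat\varphi^{(1)},\hat\varphi^{(2)}$ be the optimal share processes described in the context (which, with consumption $\hat c$, solve $\sup_{c\in\mathcal C}\mathbb E[\int_0^\infty e^{-\delta t}U(c_t)dt]$). Define $$\underline\pi:=\frac{\pi_1(\underline x)}{\pi_1(\underline x)+(1+\overline\lambda)(1-\pi_1(\underline x))},\qquad \overline\pi:=\frac{\pi_1(\overline x)}{\pi_1(\overline x)+(1-\underline\lambda)(1-\pi_1(\overline x))}.$$ Then, almost surely, for all $t\ge0$, $$\underline\pi\le\frac{\hat\varphi^{(1)}_tS^{(1)}_t}{\hat\varphi^{(0)}_t+\hat\varphi^{(1)}_tS^{(1)}_t+\hat\varphi^{(2)}_tS^{(2)}_t}\le\overline\pi.$$ That is, it is optimal to trade the illiquid asset minimally so that the proportion of wealth invested in it stays in $[\underline\pi,\overline\pi]$.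
   Context: Market. - $B^{(1)},B^{(2)}$ are standard Brownian motions with correlation $\rho\in(-1,1)$, and the filtration is the augmented filtration they generate. - $dS^{(i)}_t=S^{(i)}_t(\mu_i\,dt+\sigma_i\,dB^{(i)}_t)$ with $S^{(i)}_0>0$ and constants $\mu_i,\sigma_i>0$, $i=1,2$; the bond has price $1$. - Asset 1 is bought at $\overline S^{(1)}=(1+\overline\lambda)S^{(1)}$ and sold at $\underline S^{(1)}=(1-\underline\lambda)S^{(1)}$, with $\overline\lambda>0$ and $\underline\lambda\in(0,1)$; $\underline y=\ln(1-\underline\lambda)$. - Initial holdings $\eta_0,\eta_1,\eta_2$ satisfy $\eta_0+\underline S^{(1)}_0\eta_1^+-\overline S^{(1)}_0\eta_1^-+S^{(2)}_0\eta_2\ge0$. - $p\in(-\infty,1)\setminus\{0\}$, $U(c)=c^p/p$ for $c>0$, $U(0)=0$ if $p>0$ and $U(0)=-\infty$ if $p<0$; $q=p/(1-p)$; $\delta>0$. Standing assumption: $$\delta>\frac{q}{2(1-\rho^2)}\Big((\tfrac{\mu_1}{\sigma_1})^2+(\tfrac{\mu_2}{\sigma_2})^2-2\rho\tfrac{\mu_1\mu_2}{\sigma_1\sigma_2}\Big),\qquad \mu_1\ne\rho\mu_2\sigma_1/\sigma_2,\qquad \mu_2\ne\rho\sigma_1\sigma_2/(1+q).$$ Admissible consumptions. $\mathcal C$ is the set of nonnegative, right-continuous, locally integrable optional $c$ for which there exist right-continuous optional $(\varphi^{(0)},\varphi^{(1)},\varphi^{(2)})$ with $\varphi^{(i)}_{0-}=\eta_i$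 such that: - $\varphi^{(1)}$ has finite variation; - $\varphi^{(0)}_t+\underline S^{(1)}_t(\varphi^{(1)}_t)^+-\overline S^{(1)}_t(\varphi^{(1)}_t)^-+S^{(2)}_t\varphi^{(2)}_t\ge0$ for all $t\ge0$; - $\varphi^{(0)}_t+\varphi^{(2)}_tS^{(2)}_t=\eta_0+\eta_2S^{(2)}_0+\int_0^t\varphi^{(2)}dS^{(2)}-\int_0^t\overline S^{(1)}d(\varphi^{(1)})^\uparrow+\int_0^t\underline S^{(1)}d(\varphi^{(1)})^\downarrow-\int_0^tc_u\,du$, where $(\varphi^{(1)})^\uparrow$ and $(\varphi^{(1)})^\downarrow$ are the cumulative purchases and sales. Functions. For $s_1\ne-\sigma_1$: $$\theta_1(m,s_1,s_2)=\tfrac{\rho(\sigma_2s_2-\mu_2)}{(1-\rho^2)\sigma_2}-\tfrac{\mu_2s_2-(m+\mu_1+s_1\sigma_1+\frac12(s_1^2+s_2^2))\sigma_2}{(1-\rho^2)\sigma_2(s_1+\sigma_1)},\qquad \theta_2=\tfrac{\mu_2}{\sigma_2}-\rho\theta_1,$$ $$\alpha=(1+q)\delta-\tfrac{q(1+q)}2(\theta_1^2+\theta_2^2+2\rho\theta_1\theta_2),\qquad \beta=q((s_1+\rho s_2)\theta_1+(\rho s_1+s_2)\theta_2),\qquad \gamma=\tfrac12(s_1^2+s_2^2+2\rho s_1s_2).$$ Conditions (G1)–(G5) on $\underline x<\overline x$ and $g\in C^2([\underline x,\overline x])$: - (G1) if $\mu_1>\rho\mu_2\sigma_1/\sigma_2$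 then $0<\underline x<\overline x$, otherwise $\underline x<\overline x<0$. - (G2) $\inf_{m,s_1,s_2}\{-\alpha g(x)-(m+\beta)x+\gamma\frac{x}{g'(x)}+\operatorname{sgn}(p)\}=0$ on $[\underline x,\overline x]$. - (G3) $g'(\underline x)=g'(\overline x)=0$ and $\int_{\underline x}^{\overline x}g'(x)/x\,dx=\log\frac{1+\overline\lambda}{1-\underline\lambda}$. - (G4) $q\,g$, $q\,g(g'+1)-(1+q)xg'$, $q(g-xg')$ and $g'+1$ are strictly positive on $[\underline x,\overline x]$. - (G5) $g'(x)/x>0$ on $(\underline x,\overline x)$. Construction. - $(\hat m,\hat s_1,\hat s_2)(x)$ is the (well-defined) minimizer in (G2); $\hat\alpha,\hat\beta,\hat\gamma,\hat\theta_1,\hat\theta_2$ are the corresponding compositions, e.g. $\hat\alpha(x)=\alpha(\hat m(x),\hat s_1(x),\hat s_2(x))$. - $f(x)=\underline y+\int_x^{\overline x}\frac{g'(t)}t\,dt$, $\xi(x)=\eta_0+\eta_1S^{(1)}_0e^{f(x)}+\eta_2S^{(2)}_0$, and $r(x)=\eta_1S^{(1)}_0e^{f(x)}-\xi(x)\frac{x}{qg(x)}$. - $\hat x=\overline x$ if $r>0$ on $[\underline x,\overline x]$; $\hat x=\underline x$ if $r<0$ there; otherwise $\hat x$ is a root of $r$. - $(X,\Phi)$ is the unique solution of the reflected SDE on $[\underline x,\overline x]$ $$dX_t=(X_t\hat\alpha(X_t)+\tfrac{X_t\hat\beta(X_t)}{g'(X_t)})dt-\tfrac{X_t\hat s_1(X_t)}{g'(X_t)}dB^{(1)}_t-\tfrac{X_t\hat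 s_2(X_t)}{g'(X_t)}dB^{(2)}_t+d\Phi_t,\qquad X_0=\hat x,$$ where $\Phi$ is continuous of finite variation and increases only when $X=\underline x$ and decreases only when $X=\overline x$. - $\tilde S_t=S^{(1)}_te^{f(X_t)}$, and $d\hat H_t/\hat H_t=-\hat\theta_1(X_t)dB^{(1)}_t-\hat\theta_2(X_t)dB^{(2)}_t$ with $\hat H_0=1$. - $$\pi_1(x)=\frac{(1+q)\hat\theta_1(x)-\frac{x\hat s_1(x)}{g(x)}}{\hat s_1(x)+\sigma_1},\qquad \pi_2(x)=\frac1{\sigma_2}\Big((1+q)\hat\theta_2(x)-\frac{x\hat s_2(x)}{g(x)}-\pi_1(x)\hat s_2(x)\Big).$$ - $\hat W_t=\xi(\hat x)e^{-(1+q)\delta t}\hat H_t^{-(1+q)}g(X_t)/g(\hat x)$, $\hat\varphi^{(0)}_t=(1-\pi_1(X_t)-\pi_2(X_t))\hat W_t$, $\hat\varphi^{(1)}_t=\pi_1(X_t)\hat W_t/\tilde S_t$, $\hat\varphi^{(2)}_t=\pi_2(X_t)\hat W_t/S^{(2)}_t$, and $\hat c_t=\hat W_t/|g(X_t)|$. *)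

theory Defs
  imports "HOL-Probability.Probability"
begin

definition qexp :: "real \<Rightarrow> real" where
  "qexp p = p / (1 - p)"

definition theta1 :: "real \<Rightarrow> real \<Rightarrow> real \<Rightarrow> real \<Rightarrow> real \<Rightarrow> real \<Rightarrow> real \<Rightarrow> real \<Rightarrow> real" where
  "theta1 \<rho> \<mu>1 \<mu>2 \<sigma>1 \<sigma>2 m s1 s2 =
     \<rho> * (\<sigma>2 * s2 - \<mu>2) / ((1 - \<rho>^2) * \<sigma>2)
     - (\<mu>2 * s2 - (m + \<mu>1 + s1 * \<sigma>1 + (s1^2 + s2^2) / 2) * \<sigma>2)
       / ((1 - \<rho>^2) * \<sigma>2 * (s1 + \<sigma>1))"

definition theta2 :: "real \<Rightarrow> real \<Rightarrow> real \<Rightarrow> real \<Rightarrow> real \<Rightarrow> real \<Rightarrow> real \<Rightarrow> real \<Rightarrow> real" where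
  "theta2 \<rho> \<mu>1 \<mu>2 \<sigma>1 \<sigma>2 m s1 s2 = \<mu>2 / \<sigma>2 - \<rho> * theta1 \<rho> \<mu>1 \<mu>2 \<sigma>1 \<sigma>2 m s1 s2"

definition alpha :: "real \<Rightarrow> real \<Rightarrow> real \<Rightarrow> real \<Rightarrow> real \<Rightarrow> real \<Rightarrow> real \<Rightarrow> real \<Rightarrow> real \<Rightarrow> real \<Rightarrow> real" where
  "alpha \<rho> \<mu>1 \<mu>2 \<sigma>1 \<sigma>2 p \<delta> m s1 s2 =
     (let q = qexp p; t1 = theta1 \<rho> \<mu>1 \<mu>2 \<sigma>1 \<sigma>2 m s1 s2; t2 = theta2 \<rho> \<mu>1 \<mu>2 \<sigma>1 \<sigma>2 m s1 s2
      in (1 + q) * \<delta> - q * (1 + q) / 2 * (t1^2 + t2^2 + 2 * \<rho> * t1 * t2))"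

definition beta :: "real \<Rightarrow> real \<Rightarrow> real \<Rightarrow> real \<Rightarrow> real \<Rightarrow> real \<Rightarrow> real \<Rightarrow> real \<Rightarrow> real \<Rightarrow> real" where
  "beta \<rho> \<mu>1 \<mu>2 \<sigma>1 \<sigma>2 p m s1 s2 =
     (let q = qexp p; t1 = theta1 \<rho> \<mu>1 \<mu>2 \<sigma>1 \<sigma>2 m s1 s2; t2 = theta2 \<rho> \<mu>1 \<mu>2 \<sigma>1 \<sigma>2 m s1 s2
      in q * ((s1 + \<rho> * s2) * t1 + (\<rho> * s1 + s2) * t2))"

definition gamma :: "real \<Rightarrow> real \<Rightarrow> real \<Rightarrow> real" where
  "gamma \<rho> s1 s2 = (s1^2 + s2^2 + 2 * \<rho> * s1 * s2) / 2"

definition G2dom :: "real \<Rightarrow> (real \<times> real \<times> real) set" where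
  "G2dom \<sigma>1 = {(m, s1, s2). s1 \<noteq> - \<sigma>1}"

text \<open>The term gamma * x / g'(x) is read with the
  natural convention at the endpoints, where g' = 0 (and x/g'(x) tends to +infinity by (G5)):
  it is 0 if gamma = 0 and +infinity otherwise.\<close>
definition G2obj :: "real \<Rightarrow> real \<Rightarrow> real \<Rightarrow> real \<Rightarrow> real \<Rightarrow> real \<Rightarrow> real \<Rightarrow>
    (real \<Rightarrow> real) \<Rightarrow> (real \<Rightarrow> real) \<Rightarrow> real \<Rightarrow> real \<times> real \<times> real \<Rightarrow> ereal" where
  "G2obj \<rho> \<mu>1 \<mu>2 \<sigma>1 \<sigma>2 p \<delta> g g' x z =
     (case z of (m, s1, s2) \<Rightarrow>
       ereal (- alpha \<rho> \<mu>1 \<mu>2 \<sigma>1 \<sigma>2 p \<delta> m s1 s2 * g x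
              - (m + beta \<rho> \<mu>1 \<mu>2 \<sigma>1 \<sigma>2 p m s1 s2) * x + sgn p)
       + (if g' x = 0 then (if gamma \<rho> s1 s2 = 0 then 0 else \<infinity>)
          else ereal (gamma \<rho> s1 s2 * x / g' x)))"

definition G2min :: "real \<Rightarrow> real \<Rightarrow> real \<Rightarrow> real \<Rightarrow> real \<Rightarrow> real \<Rightarrow> real \<Rightarrow>
    (real \<Rightarrow> real) \<Rightarrow> (real \<Rightarrow> real) \<Rightarrow> real \<Rightarrow> real \<times> real \<times> real" where
  "G2min \<rho> \<mu>1 \<mu>2 \<sigma>1 \<sigma>2 p \<delta> g g' x =
     (THE z. z \<in> G2dom \<sigma>1 \<and>
        (\<forall>w \<in> G2dom \<sigma>1. G2obj \<rho> \<mu>1 \<mu>2 \<sigma>1 \<sigma>2 p \<delta> g g' x z \<le> G2obj \<rho> \<mu>1 \<mu>2 \<sigma>1 \<sigma>2 p \<delta> g g' x w))"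

definition pi1 :: "real \<Rightarrow> real \<Rightarrow> real \<Rightarrow> real \<Rightarrow> real \<Rightarrow> real \<Rightarrow> real \<Rightarrow>
    (real \<Rightarrow> real) \<Rightarrow> (real \<Rightarrow> real) \<Rightarrow> real \<Rightarrow> real" where
  "pi1 \<rho> \<mu>1 \<mu>2 \<sigma>1 \<sigma>2 p \<delta> g g' x =
     (case G2min \<rho> \<mu>1 \<mu>2 \<sigma>1 \<sigma>2 p \<delta> g g' x of (m, s1, s2) \<Rightarrow>
       ((1 + qexp p) * theta1 \<rho> \<mu>1 \<mu>2 \<sigma>1 \<sigma>2 m s1 s2 - x * s1 / g x) / (s1 + \<sigma>1))"

definition pi2 :: "real \<Rightarrow> real \<Rightarrow> real \<Rightarrow> real \<Rightarrow> real \<Rightarrow> real \<Rightarrow> real \<Rightarrow>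
    (real \<Rightarrow> real) \<Rightarrow> (real \<Rightarrow> real) \<Rightarrow> real \<Rightarrow> real" where
  "pi2 \<rho> \<mu>1 \<mu>2 \<sigma>1 \<sigma>2 p \<delta> g g' x =
     (case G2min \<rho> \<mu>1 \<mu>2 \<sigma>1 \<sigma>2 p \<delta> g g' x of (m, s1, s2) \<Rightarrow>
       ((1 + qexp p) * theta2 \<rho> \<mu>1 \<mu>2 \<sigma>1 \<sigma>2 m s1 s2 - x * s2 / g x
         - pi1 \<rho> \<mu>1 \<mu>2 \<sigma>1 \<sigma>2 p \<delta> g g' x * s2) / \<sigma>2)"

definition ffun :: "real \<Rightarrow> real \<Rightarrow> (real \<Rightarrow> real) \<Rightarrow> real \<Rightarrow> real" where
  "ffun lamL xu g' x = ln (1 - lamL) + integral {x..xu} (\<lambda>t. g' t / t)"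

end

theory Submission
  imports Defs
begin


definition Mf :: "real \<Rightarrow> real \<Rightarrow> real \<Rightarrow> real \<Rightarrow> real \<Rightarrow> real \<Rightarrow> real \<Rightarrow> real" where
  "Mf \<rho> a \<mu>1 \<sigma>1 t s1 s2 = (1-\<rho>^2)* (s1+\<sigma>1)* t - \<rho>* (s2 - a)* (s1+\<sigma>1) + a* s2 - \<mu>1 - s1* \<sigma>1 - (s1^2+s2^2)/2"

definition Phi :: "real \<Rightarrow> real \<Rightarrow> real \<Rightarrow> real \<Rightarrow> real \<Rightarrow> real \<Rightarrow> real \<Rightarrow> real \<Rightarrow> real \<Rightarrow> real \<Rightarrow> real \<Rightarrow> real \<Rightarrow> real" where
  "Phi q \<delta> G x \<rho> a \<sigma>1 \<mu>1 c t s1 s2 = q* (1+q)* G* (1-\<rho>^2)/2* t^2 - x* (1-\<rho>^2)* ((1+q)* s1+\<sigma>1)* t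
     + c* (s1^2+s2^2+2* \<rho>* s1* s2) - x* ((\<rho>* a* (1+q)-\<sigma>1)* s1 + (a* (1+q)-\<rho>* \<sigma>1)* s2)
     + (-(1+q)* \<delta>* G + q* (1+q)* G* a^2/2 - x* (\<rho>* a* \<sigma>1 - \<mu>1))"

lemma theta1_Mf:
  assumes "\<sigma>2 > 0" "\<rho>^2 < 1" "s1 + \<sigma>1 \<noteq> 0"
  shows "theta1 \<rho> \<mu>1 \<mu>2 \<sigma>1 \<sigma>2 (Mf \<rho> (\<mu>2/\<sigma>2) \<mu>1 \<sigma>1 t s1 s2) s1 s2 = t"
proof -
  have k: "1 - \<rho>^2 \<noteq> 0" using assms by auto
  have k2: "(1 - \<rho>^2) * \<sigma>2 \<noteq> 0" "(1 - \<rho>^2) * \<sigma>2 * (s1 + \<sigma>1) \<noteq> 0" using assms k by auto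
  show ?thesis using assms k k2 unfolding theta1_def Mf_def
    by (simp add: divide_simps) (simp add: algebra_simps power2_eq_square)
qed

lemma Mf_theta1:
  assumes "\<sigma>2 > 0" "\<rho>^2 < 1" "s1 + \<sigma>1 \<noteq> 0"
  shows "Mf \<rho> (\<mu>2/\<sigma>2) \<mu>1 \<sigma>1 (theta1 \<rho> \<mu>1 \<mu>2 \<sigma>1 \<sigma>2 m s1 s2) s1 s2 = m"
proof -
  have k: "1 - \<rho>^2 \<noteq> 0" using assms by auto
  have k2: "(1 - \<rho>^2) * \<sigma>2 \<noteq> 0" "(1 - \<rho>^2) * \<sigma>2 * (s1 + \<sigma>1) \<noteq> 0" using assms k by auto
  show ?thesis using assms k k2 unfolding theta1_def Mf_def
    by (simp add: divide_simps) (simp add: algebra_simps power2_eq_square)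
qed

lemma objB:
  assumes "m = Mf \<rho> a \<mu>1 \<sigma>1 t s1 s2" "th2 = a - \<rho>* t"
  shows "- ((1 + q) * \<delta> - q * (1 + q) / 2 * (t^2 + th2^2 + 2 * \<rho> * t * th2)) * G
     - (m + q * ((s1 + \<rho> * s2) * t + (\<rho> * s1 + s2) * th2)) * x
     = Phi q \<delta> G x \<rho> a \<sigma>1 \<mu>1 (x/2) t s1 s2"
  unfolding assms Phi_def Mf_def
  by (simp add: field_simps) (simp add: algebra_simps power2_eq_square)

definition Qf :: "real \<Rightarrow> real \<Rightarrow> real \<Rightarrow> real \<Rightarrow> real \<Rightarrow> real \<Rightarrow> real \<Rightarrow> real \<Rightarrow> real \<Rightarrow> real" where
  "Qf c A x k q \<rho> u v w = A/2* u^2 - x* k* (1+q)* u* v + c* (v^2+w^2+2* \<rho>* v * w)"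

lemma Phi_c: "Phi q \<delta> G x \<rho> a \<sigma>1 \<mu>1 c1 t s1 s2 + c2* (s1^2+s2^2+2* \<rho>* s1* s2) = Phi q \<delta> G x \<rho> a \<sigma>1 \<mu>1 (c1+c2) t s1 s2"
  unfolding Phi_def by (simp add: algebra_simps)

lemma Phi_expand:
  "Phi q \<delta> G x \<rho> a \<sigma>1 \<mu>1 c (t0+u) (s10+v) (s20+w) = Phi q \<delta> G x \<rho> a \<sigma>1 \<mu>1 c t0 s10 s20
     + (q* (1+q)* G* (1-\<rho>^2)* t0 - x* (1-\<rho>^2)* ((1+q)* s10+\<sigma>1))* u
     + (-x* (1-\<rho>^2)* (1+q)* t0 + 2* c* (s10+\<rho>* s20) - x* (\<rho>* a* (1+q)-\<sigma>1))* v
     + (2* c* (s20+\<rho>* s10) - x* (a* (1+q)-\<rho>* \<sigma>1))* w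
     + Qf c (q* (1+q)* G* (1-\<rho>^2)) x (1-\<rho>^2) q \<rho> u v w"
  unfolding Phi_def Qf_def by (simp add: field_simps) (simp add: algebra_simps power2_eq_square)

lemma Qf_identity:
  assumes "k = 1 - \<rho>^2" shows "4* c* Qf c (q* (1+q)* G* k) x k q \<rho> u v w = 4* c^2* (w+\<rho>* v)^2 + k* (2* c* v - x* (1+q)* u)^2 + k* (1+q)* (2* c* q* G - x^2* (1+q))* u^2"
  unfolding Qf_def assms by (simp add: field_simps) (simp add: algebra_simps power2_eq_square)

lemma Qf_zero:
  assumes "c > 0" "k > 0" "1+q > 0" "2* c* q* G - x^2* (1+q) > 0"
    and kk: "k = 1 - \<rho>^2" and "Qf c (q* (1+q)* G* k) x k q \<rho> u v w \<le> 0"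
  shows "u = 0 \<and> v = 0 \<and> w = 0"
proof -
  let ?D = "2* c* q* G - x^2* (1+q)"
  have e: "4* c^2* (w+\<rho>* v)^2 + k* (2* c* v - x* (1+q)* u)^2 + k* (1+q)* ?D* u^2 \<le> 0"
    using Qf_identity[OF kk, of c q G x u v w] assms(1,6)
    by (metis mult_le_0_iff zero_le_numeral mult_nonneg_nonpos less_imp_le mult_pos_pos zero_less_numeral)
  have a1: "4* c^2* (w+\<rho>* v)^2 \<ge> 0" by simp
  have a2: "k* (2* c* v - x* (1+q)* u)^2 \<ge> 0" using assms by simp
  have a3: "k* (1+q)* ?D* u^2 \<ge> 0" using assms by simp
  have "k* (1+q)* ?D* u^2 = 0" using e a1 a2 a3 by linarith
  hence u: "u = 0" using assms by simp
  have "k* (2* c* v - x* (1+q)* u)^2 = 0" using e a1 a2 a3 by linarith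
  hence v: "v = 0" using assms u by simp
  have "4* c^2* (w+\<rho>* v)^2 = 0" using e a1 a2 a3 by linarith
  hence "w = 0" using assms v by simp
  thus ?thesis using u v by simp
qed

lemma Qf_nonneg:
  assumes "c > 0" "k > 0" "1+q > 0" "2* c* q* G - x^2* (1+q) > 0"
    and kk: "k = 1 - \<rho>^2"
  shows "Qf c (q* (1+q)* G* k) x k q \<rho> u v w \<ge> 0"
proof -
  let ?D = "2* c* q* G - x^2* (1+q)"
  have a2: "k* (2* c* v - x* (1+q)* u)^2 \<ge> 0" using assms by simp
  have a3: "k* (1+q)* ?D* u^2 \<ge> 0" using assms by simp
  have "4* c^2* (w+\<rho>* v)^2 \<ge> 0" by simp
  hence "4* c* Qf c (q* (1+q)* G* k) x k q \<rho> u v w \<ge> 0"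
    using Qf_identity[OF kk, of c q G x u v w] a2 a3 by linarith
  thus ?thesis using assms(1) by (simp add: zero_le_mult_iff)
qed

lemma gamma_zero: assumes "\<rho>^2 < 1" "gamma \<rho> s1 s2 = 0" shows "s1 = 0 \<and> s2 = 0"
proof -
  have e: "2 * gamma \<rho> s1 s2 = (s1 + \<rho>* s2)^2 + (1 - \<rho>^2)* s2^2"
    unfolding gamma_def by (simp add: algebra_simps power2_eq_square)
  have "(1 - \<rho>^2)* s2^2 \<ge> 0" using assms by simp
  hence "(1 - \<rho>^2)* s2^2 = 0" "(s1 + \<rho>* s2)^2 = 0" using e assms(2)
    by (smt (verit) zero_le_power2)+
  thus ?thesis using assms(1) by auto
qed



lemma pi1_formula:
  fixes q G t x s1 \<sigma>1 :: real
  assumes "s1 + \<sigma>1 \<noteq> 0" "q*G \<noteq> 0" "1+q \<noteq> 0" "q* (1+q)* G* t = x* ((1+q)* s1+\<sigma>1)"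
  shows "((1+q)* t - x* s1/G)/(s1+\<sigma>1) = x/(q* G)"
proof -
  have G: "G \<noteq> 0" "q \<noteq> 0" using assms(2) by auto
  have "(1+q)* t* (q* G) = x* ((1+q)* s1+\<sigma>1)" using assms(4) by (simp add: algebra_simps)
  hence e: "(1+q)* t = x* ((1+q)* s1+\<sigma>1)/(q* G)" using assms(2) by (simp add: eq_divide_eq)
  have "(1+q)* t - x* s1/G = x* (s1+\<sigma>1)/(q* G)" unfolding e using G
    by (simp add: field_simps)
  thus ?thesis using assms(1) by simp
qed

lemma pi1_val:
  assumes rho: "-1 < \<rho>" "\<rho> < 1" and sig: "\<sigma>1 > 0" "\<sigma>2 > 0" and pp: "p < 1" "p \<noteq> 0"
   and qg: "qexp p * g x > 0"
   and c2: "qexp p * g x * (g' x + 1) - (1 + qexp p) * x * g' x > 0"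
   and c3: "qexp p * (g x - x * g' x) > 0"
   and x0: "x \<noteq> 0"
   and gp: "g' x = 0 \<or> g' x / x > 0"
  shows "pi1 \<rho> \<mu>1 \<mu>2 \<sigma>1 \<sigma>2 p \<delta> g g' x = x / (qexp p * g x)"
proof -
  define q where "q = qexp p"
  define G where "G = g x"
  define a where "a = \<mu>2/\<sigma>2"
  define k where "k = 1 - \<rho>^2"
  define obj where "obj = G2obj \<rho> \<mu>1 \<mu>2 \<sigma>1 \<sigma>2 p \<delta> g g' x"
  define th where "th = theta1 \<rho> \<mu>1 \<mu>2 \<sigma>1 \<sigma>2"
  have q1: "1 + q > 0" using pp unfolding q_def qexp_def by (simp add: field_simps)
  have r2: "\<rho>^2 < 1" using rho by (simp add: abs_square_less_1)
  have k0: "k > 0" using r2 unfolding k_def by simp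
  have qG: "q* G > 0" using qg unfolding q_def G_def by simp
  have G0: "G \<noteq> 0" "q \<noteq> 0" using qG by auto
  have A0: "q* (1+q)* G* k > 0" using qG q1 k0
    by (metis mult.commute mult.left_commute mult_pos_pos)
  have objeq: "obj (m,s1,s2) = ereal (Phi q \<delta> G x \<rho> a \<sigma>1 \<mu>1 (x/2) (th m s1 s2) s1 s2 + sgn p)
      + (if g' x = 0 then (if gamma \<rho> s1 s2 = 0 then 0 else \<infinity>) else ereal (gamma \<rho> s1 s2 * x / g' x))"
    if h: "s1 + \<sigma>1 \<noteq> 0" for m s1 s2
  proof -
    have "- alpha \<rho> \<mu>1 \<mu>2 \<sigma>1 \<sigma>2 p \<delta> m s1 s2 * g x - (m + beta \<rho> \<mu>1 \<mu>2 \<sigma>1 \<sigma>2 p m s1 s2) * x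
          = Phi q \<delta> G x \<rho> a \<sigma>1 \<mu>1 (x/2) (th m s1 s2) s1 s2"
      unfolding alpha_def beta_def Let_def q_def[symmetric] G_def[symmetric] th_def
      apply (rule objB)
      using Mf_theta1[OF sig(2) r2 h] unfolding a_def theta2_def by auto
    then show ?thesis unfolding obj_def G2obj_def by simp
  qed
  have key: "\<exists>t0 s10 s20. s10 + \<sigma>1 \<noteq> 0 \<and> q* (1+q)* G* t0 = x* ((1+q)* s10+\<sigma>1) \<and>
      G2min \<rho> \<mu>1 \<mu>2 \<sigma>1 \<sigma>2 p \<delta> g g' x = (Mf \<rho> a \<mu>1 \<sigma>1 t0 s10 s20, s10, s20)"
  proof (cases "g' x = 0")
    case True
    define t0 where "t0 = x* \<sigma>1/(q* (1+q)* G)"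
    define z0 where "z0 = (Mf \<rho> a \<mu>1 \<sigma>1 t0 0 0, 0::real, 0::real)"
    have Y: "q* (1+q)* G \<noteq> 0" using G0 q1 by simp
    have ft0: "q* (1+q)* G* t0 = x* ((1+q)* 0+\<sigma>1)" using Y unfolding t0_def by simp
    have s0: "(0::real) + \<sigma>1 \<noteq> 0" using sig by simp
    have th0: "th (Mf \<rho> a \<mu>1 \<sigma>1 t0 0 0) 0 0 = t0"
      unfolding th_def a_def by (rule theta1_Mf[OF sig(2) r2 s0])
    have gam0: "gamma \<rho> 0 0 = 0" by (simp add: gamma_def)
    have oz0: "obj z0 = ereal (Phi q \<delta> G x \<rho> a \<sigma>1 \<mu>1 (x/2) t0 0 0 + sgn p)"
      unfolding z0_def using objeq[OF s0] th0 gam0 True by simp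
    have gr: "q* (1+q)* G* (1-\<rho>^2)* t0 - x* (1-\<rho>^2)* ((1+q)* 0+\<sigma>1) = 0"
    proof -
      have "q* (1+q)* G* (1-\<rho>^2)* t0 - x* (1-\<rho>^2)* ((1+q)* 0+\<sigma>1)
          = (1-\<rho>^2)* (q* (1+q)* G* t0 - x* ((1+q)* 0+\<sigma>1))" by (simp add: algebra_simps)
      thus ?thesis using ft0 by simp
    qed
    have quad: "Phi q \<delta> G x \<rho> a \<sigma>1 \<mu>1 (x/2) t 0 0 = Phi q \<delta> G x \<rho> a \<sigma>1 \<mu>1 (x/2) t0 0 0
        + q* (1+q)* G* (1-\<rho>^2)/2* (t-t0)^2" for t
      using Phi_expand[of q \<delta> G x \<rho> a \<sigma>1 \<mu>1 "x/2" t0 "t - t0" 0 0 0 0] gr unfolding Qf_def by simp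
    have P0: "z0 \<in> G2dom \<sigma>1 \<and> (\<forall>w \<in> G2dom \<sigma>1. obj z0 \<le> obj w)"
    proof
      show "z0 \<in> G2dom \<sigma>1" unfolding z0_def G2dom_def using sig by simp
      show "\<forall>w \<in> G2dom \<sigma>1. obj z0 \<le> obj w"
      proof
        fix w assume "w \<in> G2dom \<sigma>1"
        then obtain m s1 s2 where w: "w = (m,s1,s2)" "s1 + \<sigma>1 \<noteq> 0" unfolding G2dom_def by auto
        show "obj z0 \<le> obj w"
        proof (cases "gamma \<rho> s1 s2 = 0")
          case True2: True
          have "s1 = 0" "s2 = 0" using gamma_zero[OF r2 True2] by auto
          hence "obj w = ereal (Phi q \<delta> G x \<rho> a \<sigma>1 \<mu>1 (x/2) (th m 0 0) 0 0 + sgn p)"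
            using objeq[OF w(2)] True True2 w(1) by simp
          moreover have "q* (1+q)* G* (1-\<rho>^2)/2* (th m 0 0-t0)^2 \<ge> 0" using A0 unfolding k_def by simp
          ultimately show ?thesis unfolding oz0 quad[of "th m 0 0"] by simp
        next
          case False
          thus ?thesis using objeq[OF w(2)] True w(1) by simp
        qed
      qed
    qed
    have U: "y = z0" if hy: "y \<in> G2dom \<sigma>1 \<and> (\<forall>w \<in> G2dom \<sigma>1. obj y \<le> obj w)" for y
    proof -
      obtain m s1 s2 where w: "y = (m,s1,s2)" "s1 + \<sigma>1 \<noteq> 0" using hy unfolding G2dom_def by auto
      have le: "obj y \<le> obj z0" using hy P0 by blast
      have g0: "gamma \<rho> s1 s2 = 0"
      proof (rule ccontr)
        assume "gamma \<rho> s1 s2 \<noteq> 0"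
        hence "obj y = \<infinity>" using objeq[OF w(2)] True w(1) by simp
        thus False using le oz0 by simp
      qed
      have s: "s1 = 0" "s2 = 0" using gamma_zero[OF r2 g0] by auto
      hence "obj y = ereal (Phi q \<delta> G x \<rho> a \<sigma>1 \<mu>1 (x/2) (th m 0 0) 0 0 + sgn p)"
        using objeq[OF w(2)] True g0 w(1) by simp
      hence "q* (1+q)* G* (1-\<rho>^2)/2* (th m 0 0-t0)^2 \<le> 0" using le oz0 quad[of "th m 0 0"] by simp
      moreover have "q* (1+q)* G* (1-\<rho>^2)/2 > 0" using A0 unfolding k_def by simp
      ultimately have "(th m 0 0-t0)^2 \<le> 0"
        using mult_le_0_iff[of "q* (1+q)* G* (1-\<rho>^2)/2" "(th m 0 0-t0)^2"] by linarith
      hence "th m 0 0 = t0" by simp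
      hence "m = Mf \<rho> a \<mu>1 \<sigma>1 t0 0 0" using Mf_theta1[OF sig(2) r2 s0, of \<mu>2 \<mu>1 m 0]
        unfolding th_def a_def by simp
      thus ?thesis unfolding z0_def w(1) s by simp
    qed
    have "G2min \<rho> \<mu>1 \<mu>2 \<sigma>1 \<sigma>2 p \<delta> g g' x = z0"
      unfolding G2min_def obj_def[symmetric] by (rule the_equality[where P="\<lambda>z. z \<in> G2dom \<sigma>1 \<and> (\<forall>w \<in> G2dom \<sigma>1. obj z \<le> obj w)", OF P0 U])
    thus ?thesis using s0 ft0 unfolding z0_def by auto
  next
    case False
    have gx: "g' x / x > 0" using gp False by simp
    have xg: "x / g' x > 0" using gx by (auto simp add: zero_less_divide_iff)
    define c where "c = x/2 + x/(2* g' x)"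
    define D where "D = 2* c* q* G - x^2* (1+q)"
    have Deq: "D = (x / g' x)* (q* G* (g' x + 1) - (1+q)* x* g' x)"
      unfolding D_def c_def using False by (simp add: field_simps) (simp add: algebra_simps power2_eq_square)
    have Dp: "D > 0" unfolding Deq using mult_pos_pos[OF xg c2] unfolding q_def G_def by simp
    have "2* c* (q* G) > x^2* (1+q)" using Dp unfolding D_def by (simp add: algebra_simps)
    moreover have "x^2* (1+q) \<ge> 0" using q1 by simp
    ultimately have "2* c* (q* G) > 0" by linarith
    hence cp: "c > 0" using qG by (simp add: zero_less_mult_iff)
    define b2 where "b2 = a* (1+q) - \<rho>* \<sigma>1"
    define s10 where "s10 = x* \<sigma>1* (x - q* G)/D"
    define t0 where "t0 = x* ((1+q)* s10+\<sigma>1)/(q* (1+q)* G)"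
    define s20 where "s20 = x* b2/(2* c) - \<rho>* s10"
    have Y: "q* (1+q)* G \<noteq> 0" using G0 q1 by simp
    have ft0: "q* (1+q)* G* t0 = x* ((1+q)* s10+\<sigma>1)" using Y unfolding t0_def by simp
    have s1e: "s10 + \<sigma>1 = \<sigma>1* q* (x / g' x)* (G - x* g' x)/D"
    proof -
      have a: "x* (x-q* G) + D = q* (x/g' x)* (G - x* g' x)" unfolding D_def c_def using False
        by (simp add: field_simps) (simp add: algebra_simps power2_eq_square)
      have "s10 + \<sigma>1 = \<sigma>1* (x* (x-q* G) + D)/D" unfolding s10_def using Dp
        by (simp add: field_simps)
      thus ?thesis unfolding a by (simp add: algebra_simps)
    qed
    have s1ne: "s10 + \<sigma>1 \<noteq> 0"
    proof -
      have "q* (G - x* g' x) > 0" using c3 unfolding q_def G_def by simp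
      hence "\<sigma>1* (x / g' x)* (q* (G - x* g' x)) > 0" using sig xg by (metis mult_pos_pos)
      hence "\<sigma>1* (x / g' x)* (q* (G - x* g' x))/D > 0" using Dp by (metis divide_pos_pos)
      hence "\<sigma>1* q* (x / g' x)* (G - x* g' x)/D > 0" by (simp only: ac_simps)
      thus ?thesis unfolding s1e by (metis order_less_irrefl)
    qed
    have Ds: "D* s10 = x* \<sigma>1* (x - q* G)" unfolding s10_def using Dp by simp
    have foc1: "2* c* s10 = x* ((1+q)* t0 - \<sigma>1)"
    proof -
      have e: "(1+q)* t0 = x* ((1+q)* s10+\<sigma>1)/(q* G)"
        using ft0 G0 q1 by (simp add: field_simps)
      have "(2* c* s10)* (q* G) = (x* ((1+q)* t0 - \<sigma>1))* (q* G)"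
      proof -
        have "(2* c* s10)* (q* G) = (D + x^2* (1+q))* s10" unfolding D_def by (simp add: algebra_simps)
        also have "\<dots> = x* \<sigma>1* (x - q* G) + x^2* (1+q)* s10" using Ds by (simp add: algebra_simps)
        also have "\<dots> = (x* ((1+q)* t0 - \<sigma>1))* (q* G)" unfolding right_diff_distrib e using G0
          by (simp add: field_simps) (simp add: algebra_simps power2_eq_square)
        finally show ?thesis .
      qed
      thus ?thesis using G0 by simp
    qed
    have foc3: "2* c* (s20+\<rho>* s10) - x* (a* (1+q)-\<rho>* \<sigma>1) = 0"
      unfolding s20_def b2_def using cp by (simp add: field_simps)
    have foc2: "-x* (1-\<rho>^2)* (1+q)* t0 + 2* c* (s10+\<rho>* s20) - x* (\<rho>* a* (1+q)-\<sigma>1) = 0"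
    proof -
      have "2* c* (s10+\<rho>* s20) = (1-\<rho>^2)* (2* c* s10) + \<rho>* x* b2"
        unfolding s20_def using cp by (simp add: field_simps) (simp add: algebra_simps power2_eq_square)
      also have "\<dots> = (1-\<rho>^2)* (x* ((1+q)* t0 - \<sigma>1)) + \<rho>* x* b2" unfolding foc1 ..
      finally show ?thesis unfolding b2_def by (simp add: algebra_simps power2_eq_square)
    qed
    have gr1: "q* (1+q)* G* (1-\<rho>^2)* t0 - x* (1-\<rho>^2)* ((1+q)* s10+\<sigma>1) = 0"
    proof -
      have "q* (1+q)* G* (1-\<rho>^2)* t0 - x* (1-\<rho>^2)* ((1+q)* s10+\<sigma>1)
          = (1-\<rho>^2)* (q* (1+q)* G* t0 - x* ((1+q)* s10+\<sigma>1))" by (simp add: algebra_simps)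
      thus ?thesis using ft0 by simp
    qed
    define z0 where "z0 = (Mf \<rho> a \<mu>1 \<sigma>1 t0 s10 s20, s10, s20)"
    have objc: "obj (m,s1,s2) = ereal (Phi q \<delta> G x \<rho> a \<sigma>1 \<mu>1 c (th m s1 s2) s1 s2 + sgn p)"
      if h: "s1 + \<sigma>1 \<noteq> 0" for m s1 s2
    proof -
      have "gamma \<rho> s1 s2 * x / g' x = (x/(2* g' x))* (s1^2+s2^2+2* \<rho>* s1* s2)"
        unfolding gamma_def by simp
      hence "Phi q \<delta> G x \<rho> a \<sigma>1 \<mu>1 (x/2) (th m s1 s2) s1 s2 + sgn p + gamma \<rho> s1 s2 * x / g' x
          = Phi q \<delta> G x \<rho> a \<sigma>1 \<mu>1 c (th m s1 s2) s1 s2 + sgn p"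
        using Phi_c[of q \<delta> G x \<rho> a \<sigma>1 \<mu>1 "x/2" "th m s1 s2" s1 s2 "x/(2* g' x)"] unfolding c_def by simp
      thus ?thesis using objeq[OF h] False by simp
    qed
    have expand: "Phi q \<delta> G x \<rho> a \<sigma>1 \<mu>1 c t s1 s2 = Phi q \<delta> G x \<rho> a \<sigma>1 \<mu>1 c t0 s10 s20
        + Qf c (q* (1+q)* G* (1-\<rho>^2)) x (1-\<rho>^2) q \<rho> (t-t0) (s1-s10) (s2-s20)" for t s1 s2
      using Phi_expand[of q \<delta> G x \<rho> a \<sigma>1 \<mu>1 c t0 "t-t0" s10 "s1-s10" s20 "s2-s20"] gr1 foc2 foc3
      by simp
    have th0: "th (Mf \<rho> a \<mu>1 \<sigma>1 t0 s10 s20) s10 s20 = t0"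
      unfolding th_def a_def by (rule theta1_Mf[OF sig(2) r2 s1ne])
    have oz0: "obj z0 = ereal (Phi q \<delta> G x \<rho> a \<sigma>1 \<mu>1 c t0 s10 s20 + sgn p)"
      unfolding z0_def objc[OF s1ne] th0 ..
    have Dp': "2* c* q* G - x^2* (1+q) > 0" using Dp unfolding D_def .
    have P0: "z0 \<in> G2dom \<sigma>1 \<and> (\<forall>w \<in> G2dom \<sigma>1. obj z0 \<le> obj w)"
    proof
      show "z0 \<in> G2dom \<sigma>1" unfolding z0_def G2dom_def using s1ne by auto
      show "\<forall>w \<in> G2dom \<sigma>1. obj z0 \<le> obj w"
      proof
        fix w assume "w \<in> G2dom \<sigma>1"
        then obtain m s1 s2 where w: "w = (m,s1,s2)" "s1 + \<sigma>1 \<noteq> 0" unfolding G2dom_def by auto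
        have "Qf c (q* (1+q)* G* (1-\<rho>^2)) x (1-\<rho>^2) q \<rho> (th m s1 s2-t0) (s1-s10) (s2-s20) \<ge> 0"
          by (rule Qf_nonneg[OF cp _ q1 Dp']) (use k0 in \<open>simp_all add: k_def\<close>)
        thus "obj z0 \<le> obj w" unfolding w(1) objc[OF w(2)] oz0 expand[of "th m s1 s2" s1 s2] by simp
      qed
    qed
    have U: "y = z0" if hy: "y \<in> G2dom \<sigma>1 \<and> (\<forall>w \<in> G2dom \<sigma>1. obj y \<le> obj w)" for y
    proof -
      obtain m s1 s2 where w: "y = (m,s1,s2)" "s1 + \<sigma>1 \<noteq> 0" using hy unfolding G2dom_def by auto
      have le: "obj y \<le> obj z0" using hy P0 by blast
      hence "Qf c (q* (1+q)* G* (1-\<rho>^2)) x (1-\<rho>^2) q \<rho> (th m s1 s2-t0) (s1-s10) (s2-s20) \<le> 0"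
        unfolding w(1) objc[OF w(2)] oz0 expand[of "th m s1 s2" s1 s2] by simp
      hence z: "th m s1 s2-t0 = 0 \<and> s1-s10 = 0 \<and> s2-s20 = 0"
        using Qf_zero[OF cp _ q1 Dp' refl] k0 unfolding k_def by blast
      hence z1: "th m s1 s2 = t0" and z2: "s1 = s10" and z3: "s2 = s20" by auto
      have "m = Mf \<rho> a \<mu>1 \<sigma>1 (th m s1 s2) s1 s2" using Mf_theta1[OF sig(2) r2 w(2), of \<mu>2 \<mu>1 m s2]
        unfolding th_def a_def by simp
      hence "m = Mf \<rho> a \<mu>1 \<sigma>1 t0 s1 s2" by (simp only: z1)
      hence "m = Mf \<rho> a \<mu>1 \<sigma>1 t0 s10 s20" by (simp only: z2 z3)
      thus ?thesis unfolding z0_def w(1) z2 z3 by simp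
    qed
    have "G2min \<rho> \<mu>1 \<mu>2 \<sigma>1 \<sigma>2 p \<delta> g g' x = z0"
      unfolding G2min_def obj_def[symmetric]
      by (rule the_equality[where P="\<lambda>z. z \<in> G2dom \<sigma>1 \<and> (\<forall>w \<in> G2dom \<sigma>1. obj z \<le> obj w)", OF P0 U])
    thus ?thesis using s1ne ft0 unfolding z0_def by blast
  qed

  then obtain t0 s10 s20 where h: "s10 + \<sigma>1 \<noteq> 0" "q* (1+q)* G* t0 = x* ((1+q)* s10+\<sigma>1)"
    "G2min \<rho> \<mu>1 \<mu>2 \<sigma>1 \<sigma>2 p \<delta> g g' x = (Mf \<rho> a \<mu>1 \<sigma>1 t0 s10 s20, s10, s20)" by blast
  have "th (Mf \<rho> a \<mu>1 \<sigma>1 t0 s10 s20) s10 s20 = t0"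
    unfolding th_def a_def by (rule theta1_Mf[OF sig(2) r2 h(1)])
  hence "pi1 \<rho> \<mu>1 \<mu>2 \<sigma>1 \<sigma>2 p \<delta> g g' x = ((1+q)* t0 - x* s10/G)/(s10+\<sigma>1)"
    unfolding pi1_def h(3) th_def q_def G_def by simp
  also have "\<dots> = x/(q* G)" using pi1_formula[OF h(1) _ _ h(2)] qG q1 by (metis less_irrefl)
  finally show ?thesis unfolding q_def G_def .
qed



lemma decr_within:
  fixes f f' :: "real \<Rightarrow> real"
  assumes d: "\<And>x. x\<in>{a..b} \<Longrightarrow> (f has_real_derivative f' x) (at x within {a..b})"
    and n: "\<And>x. x\<in>{a..b} \<Longrightarrow> f' x \<le> 0" and "a \<le> c" "c \<le> d" "d \<le> b"
  shows "f d \<le> f c"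
proof -
  have cont: "continuous_on {a..b} f" by (rule DERIV_continuous_on) (use d in blast)
  show ?thesis
  proof (rule DERIV_nonpos_imp_decreasing_open[OF assms(4)])
    fix x assume x: "c < x" "x < d"
    hence ab: "a < x" "x < b" using assms by auto
    have "(f has_real_derivative f' x) (at x)" using d[of x] at_within_Icc_at[OF ab] ab by simp
    thus "\<exists>y. DERIV f x :> y \<and> y \<le> 0" using n[of x] ab by auto
  next
    show "continuous_on {c..d} f" using cont by (rule continuous_on_subset) (use assms in auto)
  qed
qed

lemma inv_anti:
  fixes a b :: real
  assumes "a* b > 0" "b \<le> a" shows "1/a \<le> 1/b"
proof -
  have ne: "a \<noteq> 0" "b \<noteq> 0" using assms(1) by auto
  have "1/b - 1/a = (a - b)/(a* b)" using ne by (simp add: field_simps)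
  also have "\<dots> \<ge> 0" using assms by simp
  finally show ?thesis by simp
qed

lemma ratio_alg:
  fixes W E S1 S2 \<pi> \<pi>2 :: real
  assumes "W \<noteq> 0" "E > 0" "S1 > 0" "S2 > 0"
  shows "(\<pi>* W/(S1* E))* S1/((1-\<pi>-\<pi>2)* W + (\<pi>* W/(S1* E))* S1 + (\<pi>2* W/S2)* S2) = \<pi>/(\<pi> + E* (1-\<pi>))"
proof -
  have a: "(\<pi>* W/(S1* E))* S1 = W* (\<pi>/E)" using assms by simp
  have b: "(\<pi>2* W/S2)* S2 = \<pi>2* W" using assms by simp
  have c: "(1-\<pi>-\<pi>2)* W + W* (\<pi>/E) + \<pi>2* W = W* (1-\<pi>+\<pi>/E)" by (simp add: algebra_simps)
  have "(W* (\<pi>/E))/(W* (1-\<pi>+\<pi>/E)) = (\<pi>/E)/(1-\<pi>+\<pi>/E)" using assms(1) by simp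
  also have "\<dots> = (E* (\<pi>/E))/(E* (1-\<pi>+\<pi>/E))" using assms(2) by simp
  also have "\<dots> = \<pi>/(\<pi> + E* (1-\<pi>))" using assms(2) by (simp add: algebra_simps)
  finally show ?thesis unfolding a b c .
qed

lemma ratio_u:
  fixes E \<pi> :: real
  assumes "\<pi> \<noteq> 0"
  shows "\<pi>/(\<pi> + E* (1-\<pi>)) = 1/(1 + E* (1/\<pi> - 1))"
proof -
  have "\<pi> + E* (1-\<pi>) = \<pi>* (1 + E* (1/\<pi> - 1))" using assms by (simp add: field_simps)
  thus ?thesis using assms by simp
qed

lemma final_alg:
  fixes W E S1 S2 \<pi> \<pi>2 lo hi vl vx vh :: real
  assumes "W \<noteq> 0" "E > 0" "S1 > 0" "S2 > 0"
    and "lo = 1/vl" "hi = 1/vh" "\<pi>/(\<pi> + E* (1-\<pi>)) = 1/vx"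
    and "vl* vx > 0" "vx* vh > 0" "vx \<le> vl" "vh \<le> vx"
  shows "lo \<le> (\<pi>* W/(S1* E))* S1/((1-\<pi>-\<pi>2)* W + (\<pi>* W/(S1* E))* S1 + (\<pi>2* W/S2)* S2) \<and>
         (\<pi>* W/(S1* E))* S1/((1-\<pi>-\<pi>2)* W + (\<pi>* W/(S1* E))* S1 + (\<pi>2* W/S2)* S2) \<le> hi"
  unfolding ratio_alg[OF assms(1-4)] assms(5-7)
  using inv_anti[OF assms(8) assms(10)] inv_anti[OF assms(9) assms(11)] by simp



theorem corollary4p6:
  fixes \<rho> \<mu>1 \<mu>2 \<sigma>1 \<sigma>2 lamU lamL p \<delta> \<eta>0 \<eta>1 \<eta>2 S10 S20 xl xu xhat :: real
    and g g' g'' :: "real \<Rightarrow> real"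
    and M :: "'w measure"
    and S1 S2 H X :: "real \<Rightarrow> 'w \<Rightarrow> real"
  assumes rho: "-1 < \<rho>" "\<rho> < 1"
    and sig: "\<sigma>1 > 0" "\<sigma>2 > 0"
    and S0pos: "S10 > 0" "S20 > 0"
    and lam: "lamU > 0" "0 < lamL" "lamL < 1"
    and pp: "p < 1" "p \<noteq> 0"
    and standing1: "\<delta> > qexp p / (2 * (1 - \<rho>^2)) *
        ((\<mu>1/\<sigma>1)^2 + (\<mu>2/\<sigma>2)^2 - 2 * \<rho> * \<mu>1 * \<mu>2 / (\<sigma>1 * \<sigma>2))"
    and standing2: "\<mu>1 \<noteq> \<rho> * \<mu>2 * \<sigma>1 / \<sigma>2"
    and standing3: "\<mu>2 \<noteq> \<rho> * \<sigma>1 * \<sigma>2 / (1 + qexp p)"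
    and solvent: "\<eta>0 + (1 - lamL) * S10 * max \<eta>1 0 - (1 + lamU) * S10 * max (- \<eta>1) 0 + S20 * \<eta>2 > 0"
    \<comment> \<open>g is C^2 on [xl, xu] with derivatives g', g''\<close>
    and xlu: "xl < xu"
    and dg: "\<And>x. x \<in> {xl..xu} \<Longrightarrow> (g has_real_derivative g' x) (at x within {xl..xu})"
    and dg': "\<And>x. x \<in> {xl..xu} \<Longrightarrow> (g' has_real_derivative g'' x) (at x within {xl..xu})"
    and cg'': "continuous_on {xl..xu} g''"
    \<comment> \<open>(G1)\<close>
    and G1: "if \<mu>1 > \<rho> * \<mu>2 * \<sigma>1 / \<sigma>2 then 0 < xl \<and> xl < xu else xl < xu \<and> xu < 0"
    \<comment> \<open>(G2)\<close>
    and G2: "\<And>x. x \<in> {xl..xu} \<Longrightarrow>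
        (INF z \<in> G2dom \<sigma>1. G2obj \<rho> \<mu>1 \<mu>2 \<sigma>1 \<sigma>2 p \<delta> g g' x z) = 0"
    \<comment> \<open>(G3)\<close>
    and G3: "g' xl = 0" "g' xu = 0"
        "integral {xl..xu} (\<lambda>x. g' x / x) = ln ((1 + lamU) / (1 - lamL))"
    \<comment> \<open>(G4)\<close>
    and G4: "\<And>x. x \<in> {xl..xu} \<Longrightarrow>
        qexp p * g x > 0 \<and>
        qexp p * g x * (g' x + 1) - (1 + qexp p) * x * g' x > 0 \<and>
        qexp p * (g x - x * g' x) > 0 \<and> g' x + 1 > 0"
    \<comment> \<open>(G5)\<close>
    and G5: "\<And>x. x \<in> {xl<..<xu} \<Longrightarrow> g' x / x > 0"
    \<comment> \<open>choice of the starting point xhat via r\<close>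
    and xhat: "let \<xi> = (\<lambda>x. \<eta>0 + \<eta>1 * S10 * exp (ffun lamL xu g' x) + \<eta>2 * S20);
                   r = (\<lambda>x. \<eta>1 * S10 * exp (ffun lamL xu g' x) - \<xi> x * x / (qexp p * g x))
               in (if (\<forall>x \<in> {xl..xu}. r x > 0) then xhat = xu
                   else if (\<forall>x \<in> {xl..xu}. r x < 0) then xhat = xl
                   else xhat \<in> {xl..xu} \<and> r xhat = 0)"
    \<comment> \<open>stochastic data (abstracted, see NOTES.md)\<close>
    and prob: "prob_space M"
    and Spos: "AE \<omega> in M. \<forall>t\<ge>0. S1 t \<omega> > 0 \<and> S2 t \<omega> > 0"
    and Hpos: "AE \<omega> in M. \<forall>t\<ge>0. H t \<omega> > 0"
    and X0: "AE \<omega> in M. X 0 \<omega> = xhat"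
    and Xrange: "AE \<omega> in M. \<forall>t\<ge>0. X t \<omega> \<in> {xl..xu}"
  shows
    "let q = qexp p;
         f = ffun lamL xu g';
         \<pi>1 = pi1 \<rho> \<mu>1 \<mu>2 \<sigma>1 \<sigma>2 p \<delta> g g';
         \<pi>2 = pi2 \<rho> \<mu>1 \<mu>2 \<sigma>1 \<sigma>2 p \<delta> g g';
         \<xi> = (\<lambda>x. \<eta>0 + \<eta>1 * S10 * exp (f x) + \<eta>2 * S20);
         W = (\<lambda>t \<omega>. \<xi> xhat * exp (- (1 + q) * \<delta> * t) * H t \<omega> powr (- (1 + q))
                       * g (X t \<omega>) / g xhat);
         St = (\<lambda>t \<omega>. S1 t \<omega> * exp (f (X t \<omega>)));
         \<phi>0 = (\<lambda>t \<omega>. (1 - \<pi>1 (X t \<omega>) - \<pi>2 (X t \<omega>)) * W t \<omega>);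
         \<phi>1 = (\<lambda>t \<omega>. \<pi>1 (X t \<omega>) * W t \<omega> / St t \<omega>);
         \<phi>2 = (\<lambda>t \<omega>. \<pi>2 (X t \<omega>) * W t \<omega> / S2 t \<omega>);
         \<pi>lo = \<pi>1 xl / (\<pi>1 xl + (1 + lamU) * (1 - \<pi>1 xl));
         \<pi>hi = \<pi>1 xu / (\<pi>1 xu + (1 - lamL) * (1 - \<pi>1 xu))
     in AE \<omega> in M. \<forall>t\<ge>0.
          \<pi>lo \<le> \<phi>1 t \<omega> * S1 t \<omega> / (\<phi>0 t \<omega> + \<phi>1 t \<omega> * S1 t \<omega> + \<phi>2 t \<omega> * S2 t \<omega>) \<and>
          \<phi>1 t \<omega> * S1 t \<omega> / (\<phi>0 t \<omega> + \<phi>1 t \<omega> * S1 t \<omega> + \<phi>2 t \<omega> * S2 t \<omega>) \<le> \<pi>hi"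
proof -
  define q where "q = qexp p"
  define f where "f = ffun lamL xu g'"
  define \<phi> where "\<phi> = (\<lambda>t::real. g' t / t)"
  have q1: "1 + q > 0" using pp unfolding q_def qexp_def by (simp add: field_simps)
  have x0: "x \<noteq> 0" if "x \<in> {xl..xu}" for x
    using G1 that by (auto split: if_splits)
  have gp: "g' x = 0 \<or> g' x / x > 0" if "x \<in> {xl..xu}" for x
  proof (cases "x = xl \<or> x = xu")
    case True thus ?thesis using G3 by auto
  next
    case False thus ?thesis using that G5[of x] by auto
  qed
  have pi1eq: "pi1 \<rho> \<mu>1 \<mu>2 \<sigma>1 \<sigma>2 p \<delta> g g' x = x / (q * g x)" if x: "x \<in> {xl..xu}" for x
  proof -
    have h: "qexp p * g x > 0" "qexp p * g x * (g' x + 1) - (1 + qexp p) * x * g' x > 0"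
      "qexp p * (g x - x * g' x) > 0" using G4[OF x] by auto
    show ?thesis unfolding q_def
      by (rule pi1_val[where g=g and g'=g' and x=x, OF rho sig pp h x0[OF x] gp[OF x]])
  qed
  have gcont: "continuous_on {xl..xu} g'" by (rule DERIV_continuous_on) (use dg' in blast)
  have phicont: "continuous_on {xl..xu} \<phi>" unfolding \<phi>_def
    by (intro continuous_intros gcont) (use x0 in auto)
  have df: "(f has_real_derivative - \<phi> x) (at x within {xl..xu})" if "x \<in> {xl..xu}" for x
  proof -
    have "((\<lambda>x. ln (1 - lamL) + integral {x..xu} \<phi>) has_real_derivative 0 + - \<phi> x) (at x within {xl..xu})"
      by (intro derivative_intros integral_has_real_derivative'[OF phicont that])
    thus ?thesis unfolding f_def ffun_def \<phi>_def by simp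
  qed
  have phinn: "\<phi> x \<ge> 0" if "x \<in> {xl..xu}" for x
    using gp[OF that] unfolding \<phi>_def by auto
  have fxu: "exp (f xu) = 1 - lamL" unfolding f_def ffun_def using lam by simp
  have fxl: "exp (f xl) = 1 + lamU"
  proof -
    have "exp (f xl) = exp (ln (1 - lamL) + ln ((1 + lamU) / (1 - lamL)))"
      unfolding f_def ffun_def G3(3) ..
    also have "\<dots> = 1 + lamU" using lam by (simp add: exp_add)
    finally show ?thesis .
  qed
  have phinn': "- \<phi> x \<le> 0" if "x \<in> {xl..xu}" for x using phinn[OF that] by simp
  have fmono: "f y \<le> f x" if "xl \<le> x" "x \<le> y" "y \<le> xu" for x y
    by (rule decr_within[OF df phinn' that])
  define u where "u = (\<lambda>x. exp (f x) * (q * g x / x - 1))"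
  have du: "(u has_real_derivative (- exp (f x) / x^2 * (q * g x * (g' x + 1) - (1+q) * x * g' x)))
      (at x within {xl..xu})" if x: "x \<in> {xl..xu}" for x
    unfolding u_def
    apply (rule derivative_eq_intros df[OF x] dg[OF x] refl | simp add: x0[OF x])+
    using x0[OF x] unfolding \<phi>_def by (simp add: field_simps power2_eq_square)
  have du': "- exp (f x) / x^2 * (q * g x * (g' x + 1) - (1+q) * x * g' x) \<le> 0" if x: "x \<in> {xl..xu}" for x
  proof -
    have "exp (f x) / x^2 * (q * g x * (g' x + 1) - (1+q) * x * g' x) \<ge> 0"
      using G4[OF x] unfolding q_def by simp
    thus ?thesis by simp
  qed
  have umono: "u y \<le> u x" if "xl \<le> x" "x \<le> y" "y \<le> xu" for x y
    by (rule decr_within[OF du du' that])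
  have xhatin: "xhat \<in> {xl..xu}" using xhat xlu unfolding Let_def by (auto split: if_splits)
  have Ehat: "1 - lamL \<le> exp (f xhat)" "exp (f xhat) \<le> 1 + lamU"
    using fmono[of xhat xu] fmono[of xl xhat] xhatin by (simp_all add: fxu[symmetric] fxl[symmetric])
  have xipos: "\<eta>0 + \<eta>1 * S10 * exp (f xhat) + \<eta>2 * S20 > 0"
  proof (cases "\<eta>1 \<ge> 0")
    case True
    have "\<eta>1 * S10 * exp (f xhat) \<ge> \<eta>1 * S10 * (1 - lamL)"
      using Ehat True S0pos by (simp add: mult_left_mono)
    thus ?thesis using solvent True by (simp add: algebra_simps)
  next
    case False
    have "\<eta>1 * S10 * exp (f xhat) \<ge> \<eta>1 * S10 * (1 + lamU)"
    proof -
      have n: "\<eta>1 * S10 \<le> 0" using False S0pos by (simp add: mult_nonpos_nonneg)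
      show ?thesis by (rule mult_left_mono_neg[OF Ehat(2) n])
    qed
    thus ?thesis using solvent False by (simp add: algebra_simps)
  qed
  define v where "v = (\<lambda>x. 1 + u x)"
  have vsign: "v xl * v x > 0 \<and> v x * v xu > 0" if x: "x \<in> {xl..xu}" for x
  proof -
    have m1: "v x \<le> v xl" "v xu \<le> v x" unfolding v_def using umono x xlu by auto
    show ?thesis
    proof (cases "\<mu>1 > \<rho> * \<mu>2 * \<sigma>1 / \<sigma>2")
      case True
      hence xlp: "0 < xl" using G1 by simp
      have "q * g xu > 0" using G4[of xu] xlu unfolding q_def by auto
      hence "q * g xu / xu > 0" using xlp xlu by simp
      hence "(1 - lamL) * (q * g xu / xu) > 0" using lam by (metis diff_gt_0_iff_gt mult_pos_pos)
      moreover have "1 + (1 - lamL) * (q * g xu / xu - 1) = lamL + (1 - lamL) * (q * g xu / xu)"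
        by (simp add: algebra_simps)
      ultimately have "v xu > 0" unfolding v_def u_def fxu using lam by linarith
      thus ?thesis using m1 by simp
    next
      case False
      hence xun: "xu < 0" using G1 by simp
      have "q * g xl > 0" using G4[of xl] xlu unfolding q_def by auto
      hence "q * g xl / xl < 0" using xun xlu by (simp add: divide_pos_neg)
      hence "(1 + lamU) * (q * g xl / xl) < 0" using lam
        by (metis add_pos_pos mult_pos_neg zero_less_one)
      moreover have "1 + (1 + lamU) * (q * g xl / xl - 1) = - lamU + (1 + lamU) * (q * g xl / xl)"
        by (simp add: algebra_simps)
      ultimately have "v xl < 0" unfolding v_def u_def fxl using lam by linarith
      thus ?thesis using m1 by (simp add: mult_neg_neg)
    qed
  qed
  define P1 where "P1 = pi1 \<rho> \<mu>1 \<mu>2 \<sigma>1 \<sigma>2 p \<delta> g g'"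
  have hval: "P1 x / (P1 x + exp (f x) * (1 - P1 x)) = 1 / v x" if x: "x \<in> {xl..xu}" for x
  proof -
    have qg: "q * g x > 0" using G4[OF x] unfolding q_def by simp
    have e: "P1 x = x / (q * g x)" unfolding P1_def by (rule pi1eq[OF x])
    have "q \<noteq> 0" "g x \<noteq> 0" using qg by auto
    hence ne: "P1 x \<noteq> 0" unfolding e using x0[OF x] by simp
    have "1 / P1 x = q * g x / x" unfolding e by simp
    thus ?thesis unfolding ratio_u[OF ne] v_def u_def by simp
  qed
  have gne: "g x \<noteq> 0" if "x \<in> {xl..xu}" for x using G4[OF that] by auto
  show ?thesis
    unfolding Let_def q_def[symmetric] f_def[symmetric] P1_def[symmetric]
    using Spos Hpos Xrange
  proof eventually_elim
    case (elim \<omega>)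
    show ?case
      apply (intro allI impI)
      subgoal premises prems for t
      proof -
        have xx: "X t \<omega> \<in> {xl..xu}" and S: "S1 t \<omega> > 0" "S2 t \<omega> > 0" and Hp: "H t \<omega> > 0"
          using elim prems by auto
        have Wne: "(\<eta>0 + \<eta>1 * S10 * exp (f xhat) + \<eta>2 * S20) * exp (- (1 + q) * \<delta> * t) *
            H t \<omega> powr - (1 + q) * g (X t \<omega>) / g xhat \<noteq> 0"
          using xipos Hp gne[OF xx] gne[OF xhatin] by simp
        have xl: "xl \<in> {xl..xu}" "xu \<in> {xl..xu}" using xlu by auto
        have vm: "v (X t \<omega>) \<le> v xl" "v xu \<le> v (X t \<omega>)" unfolding v_def using umono xx xlu by auto
        show ?thesis
          apply (rule final_alg[where vl="v xl" and vh="v xu" and vx="v (X t \<omega>)", OF Wne exp_gt_zero S])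
          using hval[OF xl(1), symmetric] hval[OF xl(2), symmetric] hval[OF xx] vsign[OF xx] vm
          unfolding fxl fxu by auto
      qed
      done
  qed
qed


end
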